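(* Let $N\ge1$ and let $A\in M_N(\mathbb{C})$ be such that $\sigma(A)\subset W(A)^\circ$. If $A_n\to A$ in $M_N(\mathbb{C})$, then $\limsup_{n\to\infty}\psi(A_n)\le\psi(A)$.
   Context: $M_N(\mathbb{C})$ denotes the algebra of complex $N\times N$ matrices acting on $\mathbb{C}^N$ with the Euclidean inner product, equipped with the operator norm. $\sigma(A)$ is the spectrum (set of eigenvalues) of $A$. The numerical range is $W(A):=\{\langle Ax,x\rangle: x\in\mathbb{C}^N,\ \|x\|=1\}$, and $W(A)^\circ$ denotes its interior in $\mathbb{C}$. The Crouzeix ratio of $A$ is $\psi(A):=\sup\{\|p(A)\|: p \text{ a polynomial with } |p|\le 1 \text{ on } W(A)\}$. *)

theory Defs
  imports "HOL-Analysis.Analysis" "HOL-Computational_Algebra.Polynomial"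
begin

text \<open>Complex N x N matrices are modelled as complex^'n^'n, acting on complex^'n
  (whose norm is the Euclidean norm); N = CARD('n) \<ge> 1.\<close>

definition opnorm :: "complex^'n^'n \<Rightarrow> real" where
  "opnorm A = onorm (\<lambda>x. A *v x)"

primrec mpow :: "complex^'n^'n \<Rightarrow> nat \<Rightarrow> complex^'n^'n" where
  "mpow A 0 = mat 1"
| "mpow A (Suc k) = A ** mpow A k"

definition poly_mat :: "complex poly \<Rightarrow> complex^'n^'n \<Rightarrow> complex^'n^'n" where
  "poly_mat p A = (\<Sum>i\<le>degree p. mat (coeff p i) ** mpow A i)"

definition cinner :: "complex^'n \<Rightarrow> complex^'n \<Rightarrow> complex" where
  "cinner x y = (\<Sum>i\<in>UNIV. x $ i * cnj (y $ i))"

definition numrange :: "complex^'n^'n \<Rightarrow> complex set" where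
  "numrange A = {cinner (A *v x) x | x. norm x = 1}"

definition mspectrum :: "complex^'n^'n \<Rightarrow> complex set" where
  "mspectrum A = {l. \<exists>x. x \<noteq> 0 \<and> A *v x = l *s x}"

definition crouzeix_ratio :: "complex^'n^'n \<Rightarrow> ereal" where
  "crouzeix_ratio A = Sup {ereal (opnorm (poly_mat p A)) | p.
      \<forall>z\<in>numrange A. norm (poly p z) \<le> 1}"

end

theory Submission
  imports Defs "HOL-Complex_Analysis.Residue_Theorem"
begin



lemma opnorm_mv: "norm ((A::complex^'n^'n) *v x) \<le> opnorm A * norm x"
  unfolding opnorm_def by (rule onorm) simp

lemma opnorm_nonneg: "0 \<le> opnorm (A::complex^'n^'n)"
  unfolding opnorm_def by (rule onorm_pos_le) simp

lemma opnorm_le: "(\<And>x. norm ((A::complex^'n^'n) *v x) \<le> b * norm x) \<Longrightarrow> opnorm A \<le> b"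
  unfolding opnorm_def by (rule onorm_le)

lemma opnorm_add: "opnorm ((A::complex^'n^'n) + B) \<le> opnorm A + opnorm B"
proof (rule opnorm_le)
  fix x
  have "norm ((A + B) *v x) \<le> norm (A *v x) + norm (B *v x)"
    by (simp add: matrix_vector_mult_add_rdistrib norm_triangle_ineq)
  also have "\<dots> \<le> opnorm A * norm x + opnorm B * norm x"
    by (intro add_mono opnorm_mv)
  finally show "norm ((A + B) *v x) \<le> (opnorm A + opnorm B) * norm x" by (simp add: algebra_simps)
qed

lemma opnorm_mult: "opnorm ((A::complex^'n^'n) ** B) \<le> opnorm A * opnorm B"
proof (rule opnorm_le)
  fix x
  have "norm ((A ** B) *v x) = norm (A *v (B *v x))" by (simp add: matrix_vector_mul_assoc)
  also have "\<dots> \<le> opnorm A * norm (B *v x)" by (rule opnorm_mv)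
  also have "\<dots> \<le> opnorm A * (opnorm B * norm x)" by (intro mult_left_mono opnorm_mv opnorm_nonneg)
  finally show "norm ((A ** B) *v x) \<le> (opnorm A * opnorm B) * norm x" by (simp add: algebra_simps)
qed

lemma opnorm_minus: "opnorm (- (A::complex^'n^'n)) = opnorm A"
  unfolding opnorm_def
proof -
  have "(\<lambda>x. (- A) *v x) = (\<lambda>x. - (A *v x))"
    by (rule ext) (simp add: vec_eq_iff matrix_vector_mult_def sum_negf)
  then show "onorm ((*v) (- A)) = onorm ((*v) A)" by (simp add: onorm_neg)
qed

lemma opnorm_diff_commute: "opnorm ((A::complex^'n^'n) - B) = opnorm (B - A)"
  by (metis minus_diff_eq opnorm_minus)

lemma opnorm_diff: "opnorm ((A::complex^'n^'n) - B) \<le> opnorm A + opnorm B"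
  using opnorm_add[of A "-B"] by (simp add: opnorm_minus)

lemma mat_mv: "(mat c :: complex^'n^'n) *v x = c *s x"
proof -
  have "\<And>i. (\<Sum>j\<in>UNIV. (if i = j then c else 0) * x $ j) = c * x $ i"
    by (subst sum.cong[OF refl, of _ _ "\<lambda>j. if i = j then c * x $ j else 0"]) auto
  then show ?thesis by (simp add: vec_eq_iff matrix_vector_mult_def mat_def)
qed

lemma norm_smult_vec: "norm (c *s (x::complex^'n)) = norm c * norm x"
  by (simp add: norm_vec_def norm_mult L2_set_right_distrib)

lemma opnorm_mat: "opnorm (mat c :: complex^'n^'n) \<le> norm c"
  by (rule opnorm_le) (simp add: mat_mv norm_smult_vec)

lemma entry_le_opnorm: "norm ((A::complex^'n^'n) $ i $ j) \<le> opnorm A"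
proof -
  have "A $ i $ j = (A *v axis j 1) $ i"
    by (simp add: matrix_vector_mult_def axis_def if_distrib sum.delta cong: if_cong)
  then have "norm (A $ i $ j) \<le> norm (A *v axis j 1)" using Finite_Cartesian_Product.norm_nth_le by metis
  also have "\<dots> \<le> opnorm A" using opnorm_mv[of A "axis j 1"] by (simp add: norm_axis_1)
  finally show ?thesis .
qed

lemma opnorm_le_entries: "opnorm (A::complex^'n^'n) \<le> (\<Sum>i\<in>UNIV. \<Sum>j\<in>UNIV. norm (A $ i $ j))"
proof (rule opnorm_le)
  fix x
  have "norm (A *v x) \<le> (\<Sum>i\<in>UNIV. norm ((A *v x) $ i))"
    unfolding norm_vec_def by (rule L2_set_le_sum) simp
  also have "\<dots> \<le> (\<Sum>i\<in>UNIV. \<Sum>j\<in>UNIV. norm (A $ i $ j) * norm x)"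
  proof (rule sum_mono)
    fix i
    have "norm ((A *v x) $ i) = norm (\<Sum>j\<in>UNIV. A $ i $ j * x $ j)" by (simp add: matrix_vector_mult_def)
    also have "\<dots> \<le> (\<Sum>j\<in>UNIV. norm (A $ i $ j * x $ j))" by (rule norm_sum)
    also have "\<dots> \<le> (\<Sum>j\<in>UNIV. norm (A $ i $ j) * norm x)"
      by (intro sum_mono) (simp add: norm_mult mult_left_mono Finite_Cartesian_Product.norm_nth_le del: norm_vec_def)
    finally show "norm ((A *v x) $ i) \<le> (\<Sum>j\<in>UNIV. norm (A $ i $ j) * norm x)" .
  qed
  finally show "norm (A *v x) \<le> (\<Sum>i\<in>UNIV. \<Sum>j\<in>UNIV. norm (A $ i $ j)) * norm x"
    by (simp add: sum_distrib_right)
qed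



lemma madd_rdistrib: "((A::complex^'n^'n) + B) ** C = A ** C + B ** C"
  by (simp add: vec_eq_iff matrix_matrix_mult_def distrib_right sum.distrib)
lemma mdiff_rdistrib: "((A::complex^'n^'n) - B) ** C = A ** C - B ** C"
  by (simp add: vec_eq_iff matrix_matrix_mult_def left_diff_distrib sum_subtractf)
lemma mdiff_ldistrib: "(C::complex^'n^'n) ** (A - B) = C ** A - C ** B"
  by (simp add: vec_eq_iff matrix_matrix_mult_def right_diff_distrib sum_subtractf)
lemma mat_add: "(mat (a + b) :: complex^'n^'n) = mat a + mat b"
  by (simp add: vec_eq_iff mat_def)
lemma mat_diff: "(mat (a - b) :: complex^'n^'n) = mat a - mat b"
  by (simp add: vec_eq_iff mat_def)
lemma mat_zero: "(mat 0 :: complex^'n^'n) = 0"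
  by (simp add: vec_eq_iff mat_def)

lemma mat_mult_entry: "((mat c :: complex^'n^'n) ** A) $ i $ j = c * A $ i $ j"
proof -
  have "(\<Sum>k\<in>UNIV. (if i = k then c else 0) * A $ k $ j) = c * A $ i $ j"
    by (subst sum.cong[OF refl, of _ _ "\<lambda>k. if i = k then c * A $ k $ j else 0"]) auto
  then show ?thesis by (simp add: matrix_matrix_mult_def mat_def)
qed
lemma mult_mat_entry: "(A ** (mat c :: complex^'n^'n)) $ i $ j = c * A $ i $ j"
proof -
  have "(\<Sum>k\<in>UNIV. A $ i $ k * (if k = j then c else 0)) = c * A $ i $ j"
    by (subst sum.cong[OF refl, of _ _ "\<lambda>k. if k = j then c * A $ i $ k else 0"]) auto
  then show ?thesis by (simp add: matrix_matrix_mult_def mat_def)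
qed
lemma mat_comm: "(mat c :: complex^'n^'n) ** A = A ** mat c"
  by (simp add: vec_eq_iff mat_mult_entry mult_mat_entry)
lemma mat_mult_mat: "(mat a :: complex^'n^'n) ** mat b = mat (a * b)"
  by (simp add: vec_eq_iff mat_mult_entry) (simp add: mat_def)
lemma mat_zero_mult: "(mat 0 :: complex^'n^'n) ** A = 0"
  by (simp add: vec_eq_iff mat_mult_entry)

lemma mult_sum_left: "(A::complex^'n^'n) ** sum f S = (\<Sum>i\<in>S. A ** f i)"
  by (induction S rule: infinite_finite_induct) (auto simp: matrix_add_ldistrib)

lemma mat_scal_assoc: "(mat c :: complex^'n^'n) ** (X ** M) = X ** (mat c ** M)"
  by (metis mat_comm matrix_mul_assoc)

lemma poly_mat_ext:
  assumes "degree p \<le> n"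
  shows "poly_mat p X = (\<Sum>i\<le>n. mat (coeff p i) ** mpow X i)"
proof -
  have "(\<Sum>i\<le>n. mat (coeff p i) ** mpow X i) = (\<Sum>i\<le>degree p. mat (coeff p i) ** mpow X i)"
    using assms by (intro sum.mono_neutral_right) (auto simp: coeff_eq_0 mat_zero_mult)
  then show ?thesis by (simp add: poly_mat_def)
qed

lemma poly_mat_pCons: "poly_mat (pCons a p) X = mat a + X ** poly_mat p X"
proof -
  have "poly_mat (pCons a p) X = (\<Sum>i\<le>Suc (degree p). mat (coeff (pCons a p) i) ** mpow X i)"
    by (rule poly_mat_ext) (simp add: degree_pCons_le)
  also have "\<dots> = mat a ** mat 1 + (\<Sum>i\<le>degree p. mat (coeff p i) ** (X ** mpow X i))"
    by (subst sum.atMost_Suc_shift) simp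
  also have "\<dots> = mat a + X ** poly_mat p X"
    by (simp add: poly_mat_def mult_sum_left mat_scal_assoc)
  finally show ?thesis .
qed

lemma poly_mat_0[simp]: "poly_mat 0 X = 0"
  by (simp add: poly_mat_def mat_zero_mult)

lemma poly_mat_const: "poly_mat [:c:] X = mat c"
  by (simp add: poly_mat_pCons)

lemma poly_mat_add: "poly_mat (p + q) X = poly_mat p X + poly_mat q X"
proof (induction p arbitrary: q)
  case 0 then show ?case by simp
next
  case (pCons a p)
  show ?case
  proof (cases q rule: pCons_cases)
    case (pCons b q')
    then show ?thesis using pCons.IH[of q']
      by (simp add: poly_mat_pCons mat_add matrix_add_ldistrib algebra_simps)
  qed
qed

lemma poly_mat_smult: "poly_mat (smult c p) X = mat c ** poly_mat p X"
proof (induction p)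
  case 0 then show ?case by (simp add: times0_right)
next
  case (pCons a p)
  then show ?case
    by (simp add: poly_mat_pCons matrix_add_ldistrib mat_mult_mat mat_scal_assoc)
qed

lemma poly_mat_mult: "poly_mat (p * q) X = poly_mat p X ** poly_mat q X"
proof (induction p)
  case 0 then show ?case by (simp add: vec_eq_iff matrix_matrix_mult_def)
next
  case (pCons a p)
  have "poly_mat (pCons a p * q) X = poly_mat (smult a q + pCons 0 (p * q)) X" by simp
  also have "\<dots> = mat a ** poly_mat q X + X ** (poly_mat p X ** poly_mat q X)"
    by (simp add: poly_mat_add poly_mat_smult poly_mat_pCons pCons.IH mat_zero)
  also have "\<dots> = poly_mat (pCons a p) X ** poly_mat q X"
    by (simp add: poly_mat_pCons madd_rdistrib matrix_mul_assoc)
  finally show ?case .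
qed

lemma poly_mat_pcompose: "poly_mat (pcompose p q) X = poly_mat p (poly_mat q X)"
proof (induction p)
  case 0 then show ?case by simp
next
  case (pCons a p)
  then show ?case
    by (simp add: pcompose_pCons poly_mat_add poly_mat_const poly_mat_mult poly_mat_pCons)
qed

lemma poly_mat_linear: "poly_mat [:a, b:] X = mat a + X ** mat b"
  by (simp add: poly_mat_pCons)



lemma cinner_add_left: "cinner (u + v) w = cinner u w + cinner v w"
  by (simp add: cinner_def distrib_right sum.distrib)
lemma cinner_add_right: "cinner w (u + v) = cinner w u + cinner w v"
  by (simp add: cinner_def distrib_left sum.distrib)
lemma cinner_diff_left: "cinner (u - v) w = cinner u w - cinner v w"
  by (simp add: cinner_def left_diff_distrib sum_subtractf)
lemma cinner_scale_left: "cinner (c *s u) w = c * cinner u w"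
  by (simp add: cinner_def sum_distrib_left algebra_simps)
lemma cinner_scale_right: "cinner w (c *s u) = cnj c * cinner w u"
  by (simp add: cinner_def sum_distrib_left algebra_simps)
lemma mv_add: "(B::complex^'n^'n) *v (u + v) = B *v u + B *v v"
  by (simp add: vec_eq_iff matrix_vector_mult_def distrib_left sum.distrib)
lemma mv_scale: "(B::complex^'n^'n) *v (c *s u) = c *s (B *v u)"
  by (simp add: vec_eq_iff matrix_vector_mult_def sum_distrib_left algebra_simps)

lemma cinner_self: "cinner u u = complex_of_real ((norm u)^2)"
proof -
  have "(norm u)^2 = (\<Sum>i\<in>UNIV. (norm (u $ i))^2)"
    by (simp add: norm_vec_def L2_set_def sum_nonneg)
  then have "complex_of_real ((norm u)^2) = (\<Sum>i\<in>UNIV. complex_of_real ((norm (u $ i))^2))" by simp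
  also have "\<dots> = cinner u u"
    unfolding cinner_def by (intro sum.cong refl) (metis complex_norm_square)
  finally show ?thesis ..
qed

lemma inner_eq_Re_cinner: "inner u v = Re (cinner u v)"
  by (simp add: cinner_def inner_vec_def inner_complex_def Re_sum)

lemma cinner_bound: "norm (cinner u v) \<le> norm u * norm v"
proof (cases "cinner u v = 0")
  case True then show ?thesis by simp
next
  case False
  define c where "c = cinner u v"
  define \<omega> where "\<omega> = cnj c / complex_of_real (norm c)"
  have nw: "norm \<omega> = 1" using False by (simp add: \<omega>_def c_def norm_divide)
  have "\<omega> * c = complex_of_real (norm c)"
    using False unfolding \<omega>_def c_def
    by (simp add: complex_norm_square[symmetric] power2_eq_square field_simps)
  then have "norm c = Re (cinner (\<omega> *s u) v)" by (simp add: cinner_scale_left c_def)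
  also have "\<dots> = inner (\<omega> *s u) v" by (simp add: inner_eq_Re_cinner)
  also have "\<dots> \<le> norm (\<omega> *s u) * norm v" by (rule norm_cauchy_schwarz)
  also have "\<dots> = norm u * norm v" by (simp add: norm_smult_vec nw)
  finally show ?thesis by (simp add: c_def)
qed

lemma numrange_image: "numrange A = (\<lambda>x. cinner (A *v x) x) ` sphere 0 1"
  by (auto simp: numrange_def)

lemma continuous_cinner_form: "continuous_on S (\<lambda>x. cinner ((A::complex^'n^'n) *v x) x)"
proof -
  have "bounded_linear (\<lambda>x. (A *v x) $ i)" for i
    by (rule bounded_linear_compose[OF bounded_linear_vec_nth matrix_vector_mul_bounded_linear])
  then have c1: "continuous_on S (\<lambda>x. (A *v x) $ i)" for i
    by (simp add: linear_continuous_on)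
  have c2: "continuous_on S (\<lambda>x. x $ i)" for i :: 'n
    by (simp add: linear_continuous_on bounded_linear_vec_nth)
  show ?thesis unfolding cinner_def
    by (intro continuous_intros c1 c2)
qed

lemma compact_numrange: "compact (numrange (A::complex^'n^'n))"
  unfolding numrange_image
  by (intro compact_continuous_image continuous_cinner_form compact_sphere)

lemma numrange_close:
  assumes "y \<in> numrange (A::complex^'n^'n)"
  shows "\<exists>y'\<in>numrange B. norm (y - y') \<le> opnorm (B - A)"
proof -
  obtain x where x: "norm x = 1" "y = cinner (A *v x) x" using assms by (auto simp: numrange_def)
  have "y - cinner (B *v x) x = cinner ((A - B) *v x) x"
    by (simp add: x matrix_vector_mult_diff_rdistrib cinner_diff_left)
  also have "norm \<dots> \<le> norm ((A - B) *v x) * norm x" by (rule cinner_bound)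
  also have "\<dots> \<le> opnorm (A - B)" using opnorm_mv[of "A - B" x] x by simp
  finally show ?thesis using x(1) opnorm_diff_commute[of A B]
    by (intro bexI[of _ "cinner (B *v x) x"]) (auto simp: numrange_def)
qed



lemma scaleR_vec: "r *\<^sub>R (z::complex^'n) = complex_of_real r *s z"
  by (simp add: vec_eq_iff) (metis scaleR_conv_of_real)

lemma form_scaleR: "cinner ((B::complex^'n^'n) *v (r *\<^sub>R a)) (r *\<^sub>R a) = complex_of_real (r^2) * cinner (B *v a) a"
  by (simp add: scaleR_vec mv_scale cinner_scale_left cinner_scale_right power2_eq_square)

lemma form_expand:
  "cinner ((B::complex^'n^'n) *v (p *s a + q *s b)) (p *s a + q *s b) =
     p * cnj p * cinner (B *v a) a + p * cnj q * cinner (B *v a) b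
     + q * cnj p * cinner (B *v b) a + q * cnj q * cinner (B *v b) b"
  by (simp add: mv_add mv_scale cinner_add_left cinner_add_right cinner_scale_left
      cinner_scale_right algebra_simps)

lemma th01:
  fixes B :: "complex^'n^'n"
  assumes x: "norm x = 1" and y: "norm y = 1" and Bx: "cinner (B *v x) x = 0"
    and By: "cinner (B *v y) y = 1" and u: "0 \<le> u" "u \<le> 1"
  shows "\<exists>w. norm w = 1 \<and> cinner (B *v w) w = complex_of_real u"
proof -
  define Q where "Q a b = cinner (B *v a) b" for a b
  define e where "e = Q x y - cnj (Q y x)"
  define \<omega> where "\<omega> = (if e = 0 then 1 else cnj e / complex_of_real (norm e))"
  have n\<omega>: "norm \<omega> = 1" by (simp add: \<omega>_def norm_divide)
  have \<omega>e: "Im (\<omega> * e) = 0"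
  proof (cases "e = 0")
    case False
    then have "\<omega> * e = complex_of_real (norm e)"
      unfolding \<omega>_def by (simp add: complex_norm_square[symmetric] power2_eq_square field_simps)
    then show ?thesis by simp
  qed (simp add: \<omega>_def)
  have \<omega>cnj: "\<omega> * cnj \<omega> = 1" using n\<omega> by (metis complex_norm_square of_real_1 power_one)
  define x' where "x' = \<omega> *s x"
  have Qx': "Q x' x' = 0" by (simp add: Q_def x'_def mv_scale cinner_scale_left cinner_scale_right Bx)
  define c where "c = \<omega> * Q x y + cnj \<omega> * Q y x"
  have Imc: "Im c = 0"
  proof -
    have "Im c = Im (\<omega> * Q x y) - Im (\<omega> * cnj (Q y x))" by (simp add: c_def)
    also have "\<dots> = Im (\<omega> * e)" by (simp add: e_def right_diff_distrib)
    finally show ?thesis using \<omega>e by simp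
  qed
  have cre: "c = complex_of_real (Re c)" using Imc by (simp add: complex_eq_iff)
  define v where "v s = (1 - s) *\<^sub>R x' + s *\<^sub>R y" for s :: real
  have Qv: "Q (v s) (v s) = complex_of_real (s^2 + s*(1-s)*Re c)" for s
  proof -
    have "Q (v s) (v s) = complex_of_real ((1-s)^2) * Q x' x' + complex_of_real ((1-s) * s) * Q x' y
        + complex_of_real (s*(1-s)) * Q y x' + complex_of_real (s^2) * Q y y"
      unfolding v_def Q_def scaleR_vec form_expand by (simp add: power2_eq_square)
    also have "\<dots> = complex_of_real (s*(1-s)) * c + complex_of_real (s^2)"
      using Qx' By Bx by (simp add: Q_def c_def x'_def mv_scale cinner_scale_left cinner_scale_right algebra_simps)
    also have "\<dots> = complex_of_real (s^2 + s*(1-s)*Re c)"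
      by (subst cre) simp
    finally show ?thesis .
  qed
  have vnz: "v s \<noteq> 0" if "0 \<le> s" "s \<le> 1" for s
  proof
    assume v0: "v s = 0"
    show False
    proof (cases "s = 0")
      case True
      then have "v s = x'" by (simp add: v_def)
      then show False using v0 x n\<omega> by (auto simp: x'_def norm_smult_vec)
    next
      case False
      have "s *\<^sub>R y = - ((1 - s) *\<^sub>R x')" using v0 by (simp add: v_def eq_neg_iff_add_eq_0 add.commute)
      then have "y = (- (1 - s) / s) *\<^sub>R x'" using False
        by (metis (no_types, lifting) divide_inverse_commute eq_vector_fraction_iff scaleR_minus_left)
      then have "Q y y = complex_of_real (((- (1 - s) / s))^2) * Q x' x'"
        by (simp add: Q_def form_scaleR)
      then show False using Qx' By by (simp add: Q_def)
    qed
  qed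
  define h where "h s = (s^2 + s*(1-s)*Re c) / (norm (v s))^2" for s
  have cont: "continuous_on {0..1} h"
    unfolding h_def v_def using vnz unfolding v_def
    by (intro continuous_intros) auto
  have "h 0 = 0" by (simp add: h_def)
  moreover have "h 1 = 1" by (simp add: h_def v_def y)
  ultimately obtain s where s: "s \<in> {0..1}" "h s = u"
    using IVT'[of h 0 u 1] cont u by auto
  define w where "w = (1 / norm (v s)) *\<^sub>R v s"
  have nv: "norm (v s) \<noteq> 0" using vnz s(1) by auto
  have "norm w = 1" using nv by (simp add: w_def)
  moreover have "cinner (B *v w) w = complex_of_real u"
  proof -
    have "cinner (B *v w) w = complex_of_real ((1 / norm (v s))^2) * Q (v s) (v s)"
      by (simp add: w_def Q_def form_scaleR)
    also have "\<dots> = complex_of_real (h s)"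
      by (simp add: Qv h_def divide_inverse power_inverse mult.commute)
    finally show ?thesis using s by simp
  qed
  ultimately show ?thesis by blast
qed

lemma mat_mult_mv: "((mat c :: complex^'n^'n) ** M) *v w = c *s (M *v w)"
  by (metis mat_mv matrix_vector_mul_assoc)

lemma convex_numrange: "convex (numrange (A::complex^'n^'n))"
  unfolding convex_alt
proof (intro ballI allI impI)
  fix a b and u :: real assume a: "a \<in> numrange A" and b: "b \<in> numrange A" and u: "0 \<le> u \<and> u \<le> 1"
  obtain x where x: "norm x = 1" "a = cinner (A *v x) x" using a by (auto simp: numrange_def)
  obtain y where y: "norm y = 1" "b = cinner (A *v y) y" using b by (auto simp: numrange_def)
  show "(1 - u) *\<^sub>R a + u *\<^sub>R b \<in> numrange A"
  proof (cases "a = b")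
    case True
    then have "(1 - u) *\<^sub>R a + u *\<^sub>R b = a" by (simp add: algebra_simps)
    then show ?thesis using a by simp
  next
    case False
    define d where "d = b - a"
    have d0: "d \<noteq> 0" using False by (simp add: d_def)
    define B where "B = mat (1 / d) ** (A - mat a)"
    have fB: "cinner (B *v w) w = (cinner (A *v w) w - a) / d" if "norm w = 1" for w
      using that by (simp add: B_def mat_mult_mv matrix_vector_mult_diff_rdistrib mat_mv
          cinner_scale_left cinner_diff_left cinner_self diff_divide_distrib)
    have "cinner (B *v x) x = 0" using fB[OF x(1)] x by simp
    moreover have "cinner (B *v y) y = 1" using fB[OF y(1)] y d0 by (simp add: d_def)
    ultimately obtain w where w: "norm w = 1" "cinner (B *v w) w = complex_of_real u"
      using th01[OF x(1) y(1)] u by blast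
    then have "cinner (A *v w) w = a + complex_of_real u * d"
      using fB[OF w(1)] d0 by (simp add: field_simps)
    also have "\<dots> = (1 - u) *\<^sub>R a + u *\<^sub>R b"
      by (simp add: d_def scaleR_conv_of_real algebra_simps)
    finally show ?thesis using w(1) unfolding numrange_def by (metis (mono_tags, lifting) mem_Collect_eq)
  qed
qed



lemma shrink:
  fixes A B :: "complex^'n^'n"
  assumes r: "0 < r" and ball: "cball z0 r \<subseteq> numrange A" and t: "0 \<le> t" "t \<le> 1"
    and close: "opnorm (B - A) \<le> t * r" and w: "w \<in> numrange A"
  shows "(1 - t) *\<^sub>R w + t *\<^sub>R z0 \<in> numrange B"
proof (rule ccontr)
  define z where "z = (1 - t) *\<^sub>R w + t *\<^sub>R z0"
  define \<epsilon> where "\<epsilon> = opnorm (B - A)"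
  assume "(1 - t) *\<^sub>R w + t *\<^sub>R z0 \<notin> numrange B"
  then have "z \<notin> numrange B" by (simp add: z_def)
  from separating_hyperplane_closed_point[OF convex_numrange compact_imp_closed[OF compact_numrange] this]
  obtain a b where ab: "inner a z < b" "\<forall>x\<in>numrange B. b < inner a x" by blast
  obtain y' where y': "y' \<in> numrange B" using numrange_close[OF w, of B] by blast
  have a0: "a \<noteq> 0"
  proof
    assume "a = 0"
    then show False using ab y' by auto
  qed
  have key: "b - norm a * \<epsilon> \<le> inner a y" if yA: "y \<in> numrange A" for y
  proof -
    obtain y2 where y2: "y2 \<in> numrange B" "norm (y - y2) \<le> \<epsilon>"
      using numrange_close[OF yA, of B] by (auto simp: \<epsilon>_def)
    have "\<bar>inner a (y - y2)\<bar> \<le> norm a * norm (y - y2)" by (rule Cauchy_Schwarz_ineq2)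
    also have "\<dots> \<le> norm a * \<epsilon>" using y2 by (intro mult_left_mono) auto
    finally have "\<bar>inner a (y - y2)\<bar> \<le> norm a * \<epsilon>" .
    moreover have "inner a y = inner a y2 + inner a (y - y2)" by (simp add: inner_diff_right)
    ultimately show ?thesis using ab(2) y2(1) by force
  qed
  have "z0 - (r / norm a) *\<^sub>R a \<in> cball z0 r"
    using r a0 by (simp add: dist_norm)
  then have "b - norm a * \<epsilon> \<le> inner a (z0 - (r / norm a) *\<^sub>R a)" using ball key by blast
  also have "inner a (z0 - (r / norm a) *\<^sub>R a) = inner a z0 - r * norm a"
    using a0 by (simp add: inner_diff_right dot_square_norm power2_eq_square)
  finally have h1: "b - norm a * \<epsilon> + r * norm a \<le> inner a z0" by simp
  have h2: "b - norm a * \<epsilon> \<le> inner a w" using key w by blast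
  have "inner a z = (1 - t) * inner a w + t * inner a z0" by (simp add: z_def inner_add_right)
  moreover have "(1 - t) * (b - norm a * \<epsilon>) \<le> (1 - t) * inner a w"
    using h2 t by (intro mult_left_mono) auto
  moreover have "t * (b - norm a * \<epsilon> + r * norm a) \<le> t * inner a z0"
    using h1 t by (intro mult_left_mono) auto
  moreover have "norm a * \<epsilon> \<le> norm a * (t * r)"
    using close by (intro mult_left_mono) (auto simp: \<epsilon>_def)
  ultimately have "b \<le> inner a z" by (simp add: algebra_simps)
  then show False using ab(1) by simp
qed



definition polyfun :: "(complex \<Rightarrow> complex) \<Rightarrow> bool" where
  "polyfun f \<longleftrightarrow> (\<exists>P. \<forall>z. f z = poly P z)"

lemma polyfun_const: "polyfun (\<lambda>z. c)"
  unfolding polyfun_def by (rule exI[of _ "[:c:]"]) simp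
lemma polyfun_id: "polyfun (\<lambda>z. z)"
  unfolding polyfun_def by (rule exI[of _ "[:0, 1:]"]) simp
lemma polyfun_add: "polyfun f \<Longrightarrow> polyfun g \<Longrightarrow> polyfun (\<lambda>z. f z + g z)"
  unfolding polyfun_def by (metis poly_add)
lemma polyfun_diff: "polyfun f \<Longrightarrow> polyfun g \<Longrightarrow> polyfun (\<lambda>z. f z - g z)"
  unfolding polyfun_def by (metis poly_diff)
lemma polyfun_mult: "polyfun f \<Longrightarrow> polyfun g \<Longrightarrow> polyfun (\<lambda>z. f z * g z)"
  unfolding polyfun_def by (metis poly_mult)
lemma polyfun_if: "polyfun f \<Longrightarrow> polyfun g \<Longrightarrow> polyfun (\<lambda>z. if c then f z else g z)"
  by (cases c) auto

lemma polyfun_sum: "(\<And>a. a \<in> S \<Longrightarrow> polyfun (f a)) \<Longrightarrow> polyfun (\<lambda>z. \<Sum>a\<in>S. f a z)"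
proof (induction S rule: infinite_finite_induct)
  case (infinite S) then show ?case by (simp add: polyfun_const)
next
  case empty then show ?case by (simp add: polyfun_const)
next
  case (insert x F) then show ?case by (simp add: polyfun_add)
qed
lemma polyfun_prod: "(\<And>a. a \<in> S \<Longrightarrow> polyfun (f a)) \<Longrightarrow> polyfun (\<lambda>z. \<Prod>a\<in>S. f a z)"
proof (induction S rule: infinite_finite_induct)
  case (infinite S) then show ?case by (simp add: polyfun_const)
next
  case empty then show ?case by (simp add: polyfun_const)
next
  case (insert x F) then show ?case by (simp add: polyfun_mult)
qed

lemma poly_holo: "(\<lambda>z. poly P z) holomorphic_on S"
proof (induction P)
  case 0 then show ?case by simp
next
  case (pCons a p) then show ?case by (simp add: holomorphic_intros)
qed

lemma polyfun_holo: "polyfun f \<Longrightarrow> f holomorphic_on S"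
  unfolding polyfun_def using poly_holo
  by (metis (no_types, lifting) ext)

lemma polyfun_det:
  assumes "\<And>i j. polyfun (\<lambda>z. M z $ i $ j)"
  shows "polyfun (\<lambda>z. det (M z :: complex^'n^'n))"
  unfolding det_def by (intro polyfun_sum polyfun_mult polyfun_const polyfun_prod assms)

definition charf :: "complex^'n^'n \<Rightarrow> complex \<Rightarrow> complex" where
  "charf X z = det (mat z - X)"

lemma polyfun_matentry: "polyfun (\<lambda>z. (mat z - X) $ i $ j)"
  by (cases "i = j") (simp_all add: mat_def polyfun_diff polyfun_id polyfun_const)

lemma polyfun_matentry': "polyfun (\<lambda>z. mat z $ i $ j - X $ i $ j)"
  using polyfun_matentry[of X i j] by simp

lemma polyfun_numentry: "polyfun (\<lambda>z. if c then a else (mat z - X) $ i $ l)"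
  by (cases c) (simp_all add: polyfun_const polyfun_matentry')

lemma polyfun_charf: "polyfun (charf X)"
  unfolding charf_def by (rule polyfun_det[OF polyfun_matentry])

lemma mat_minus_mv: "(mat z - (X::complex^'n^'n)) *v v = z *s v - X *v v"
  by (simp add: matrix_vector_mult_diff_rdistrib mat_mv)

lemma mspectrum_charf: "z \<in> mspectrum (X::complex^'n^'n) \<longleftrightarrow> charf X z = 0"
proof -
  have lin: "Vector_Spaces.linear (*s) (*s) ((*v) (mat z - X))"
    by (rule matrix_vector_mul_linear_gen)
  have "charf X z \<noteq> 0 \<longleftrightarrow> inj ((*v) (mat z - X))"
    using det_nz_iff_inj_gen[OF lin] by (simp add: charf_def matrix_of_matrix_vector_mul)
  also have "\<dots> \<longleftrightarrow> z \<notin> mspectrum X"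
  proof
    assume inj: "inj ((*v) (mat z - X))"
    show "z \<notin> mspectrum X"
    proof
      assume "z \<in> mspectrum X"
      then obtain v where v: "v \<noteq> 0" "X *v v = z *s v" by (auto simp: mspectrum_def)
      then have "(mat z - X) *v v = (mat z - X) *v 0" by (simp add: mat_minus_mv)
      then show False using inj v(1) by (meson injD)
    qed
  next
    assume ns: "z \<notin> mspectrum X"
    show "inj ((*v) (mat z - X))"
    proof (rule injI)
      fix a b assume ab: "(mat z - X) *v a = (mat z - X) *v b"
      have "(mat z - X) *v (a - b) = 0" using ab by (simp add: matrix_vector_mult_diff_distrib)
      then have eq: "X *v (a - b) = z *s (a - b)" by (simp add: mat_minus_mv)
      show "a = b"
      proof (rule ccontr)
        assume "a \<noteq> b"
        then have "a - b \<noteq> 0" by simp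
        with eq have "z \<in> mspectrum X" unfolding mspectrum_def by blast
        with ns show False by simp
      qed
    qed
  qed
  finally show ?thesis by blast
qed

lemma eig_bound: "z \<in> mspectrum (X::complex^'n^'n) \<Longrightarrow> norm z \<le> opnorm X"
proof -
  assume "z \<in> mspectrum X"
  then obtain v where v: "v \<noteq> 0" "X *v v = z *s v" by (auto simp: mspectrum_def)
  have "norm z * norm v \<le> opnorm X * norm v"
    using opnorm_mv[of X v] v by (simp add: norm_smult_vec)
  then show ?thesis using v(1) by simp
qed

lemma finite_spec: "finite (mspectrum (X::complex^'n^'n))"
proof -
  obtain P where P: "\<And>z. charf X z = poly P z" using polyfun_charf[of X] by (auto simp: polyfun_def)
  define z0 where "z0 = complex_of_real (opnorm X + 1)"
  have "z0 \<notin> mspectrum X"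
  proof
    assume "z0 \<in> mspectrum X"
    from eig_bound[OF this] show False using opnorm_nonneg[of X] by (simp add: z0_def)
  qed
  then have "poly P z0 \<noteq> 0" using P mspectrum_charf by metis
  then have "P \<noteq> 0" by auto
  then have "finite {z. poly P z = 0}" by (rule poly_roots_finite)
  moreover have "mspectrum X \<subseteq> {z. poly P z = 0}"
  proof
    fix z assume "z \<in> mspectrum X"
    then have "charf X z = 0" by (simp add: mspectrum_charf)
    then show "z \<in> {z. poly P z = 0}" by (simp add: P)
  qed
  ultimately show ?thesis by (rule finite_subset[rotated])
qed

definition numf :: "complex^'n^'n \<Rightarrow> 'n \<Rightarrow> 'n \<Rightarrow> complex \<Rightarrow> complex" where
  "numf X k j z = det (\<chi> i l. if l = k then (if i = j then 1 else 0) else (mat z - X) $ i $ l)"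

definition resolv :: "complex^'n^'n \<Rightarrow> complex \<Rightarrow> complex^'n^'n" where
  "resolv X z = (\<chi> k j. numf X k j z / charf X z)"

lemma resolv_right:
  assumes "z \<notin> mspectrum (X::complex^'n^'n)"
  shows "(mat z - X) ** resolv X z = mat 1"
proof -
  have d0: "det (mat z - X) \<noteq> 0" using assms mspectrum_charf charf_def by metis
  have "((mat z - X) ** resolv X z) $ i $ j = mat 1 $ i $ j" for i j
  proof -
    define b :: "complex^'n" where "b = (\<chi> i. if i = j then 1 else 0)"
    define x :: "complex^'n" where "x = (\<chi> k. resolv X z $ k $ j)"
    have "x = (\<chi> k. det (\<chi> i l. if l = k then b $ i else (mat z - X) $ i $ l) / det (mat z - X))"
    proof -
      have bi: "\<And>i. b $ i = (if i = j then 1 else 0)" by (simp add: b_def)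
      show ?thesis unfolding x_def resolv_def numf_def charf_def bi by simp
    qed
    then have "(mat z - X) *v x = b" using cramer[OF d0] by blast
    moreover have "((mat z - X) ** resolv X z) $ i $ j = ((mat z - X) *v x) $ i"
      by (simp add: matrix_matrix_mult_def matrix_vector_mult_def x_def)
    ultimately show ?thesis by (simp add: b_def mat_def)
  qed
  then show ?thesis by (simp add: vec_eq_iff)
qed

lemma resolv_left:
  assumes "z \<notin> mspectrum (X::complex^'n^'n)"
  shows "resolv X z ** (mat z - X) = mat 1"
  using resolv_right[OF assms] matrix_left_right_inverse by blast

lemma resolv_holo: "(\<lambda>z. resolv X z $ k $ j) holomorphic_on (- mspectrum X)"
proof -
  have "polyfun (numf X k j)"
    unfolding numf_def
    by (rule polyfun_det) (simp add: polyfun_numentry)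
  then have "(\<lambda>z. numf X k j z / charf X z) holomorphic_on (- mspectrum X)"
    by (intro holomorphic_on_divide polyfun_holo polyfun_charf) (auto simp: mspectrum_charf)
  then show ?thesis by (simp add: resolv_def)
qed



lemma resolv_mv1: "z \<notin> mspectrum X \<Longrightarrow> (mat z - X) *v (resolv X z *v v) = v"
  by (simp add: matrix_vector_mul_assoc resolv_right)
lemma resolv_mv2: "z \<notin> mspectrum X \<Longrightarrow> resolv X z *v ((mat z - X) *v v) = v"
  by (simp add: matrix_vector_mul_assoc resolv_left)

lemma norm_le_resolv:
  "z \<notin> mspectrum X \<Longrightarrow> norm v \<le> opnorm (resolv X z) * norm ((mat z - X) *v v)"
  using opnorm_mv[of "resolv X z" "(mat z - X) *v v"] resolv_mv2[of z X v] by simp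

lemma resolv_perturb:
  fixes A B :: "complex^'n^'n"
  assumes z: "z \<notin> mspectrum A" and M: "opnorm (resolv A z) \<le> M" and d: "opnorm (B - A) * M \<le> 1/2"
  shows "z \<notin> mspectrum B" "opnorm (resolv B z) \<le> 2 * M"
proof -
  have M0: "0 \<le> M" using M opnorm_nonneg[of "resolv A z"] by linarith
  have key: "norm v \<le> 2 * M * norm ((mat z - B) *v v)" for v
  proof -
    have eq: "(mat z - A) *v v = (mat z - B) *v v + (B - A) *v v"
      by (simp add: matrix_vector_mult_diff_rdistrib)
    have "norm v \<le> opnorm (resolv A z) * norm ((mat z - A) *v v)" by (rule norm_le_resolv[OF z])
    also have "\<dots> \<le> M * norm ((mat z - A) *v v)" by (intro mult_right_mono M) simp
    also have "\<dots> \<le> M * (norm ((mat z - B) *v v) + opnorm (B - A) * norm v)"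
      unfolding eq using M0 by (intro mult_left_mono order.trans[OF norm_triangle_ineq] add_left_mono opnorm_mv) auto
    also have "\<dots> \<le> M * norm ((mat z - B) *v v) + 1/2 * norm v"
    proof -
      have "(opnorm (B - A) * M) * norm v \<le> 1/2 * norm v" by (intro mult_right_mono d) simp
      moreover have "M * (norm ((mat z - B) *v v) + opnorm (B - A) * norm v)
          = M * norm ((mat z - B) *v v) + (opnorm (B - A) * M) * norm v" by (simp add: algebra_simps)
      ultimately show ?thesis by linarith
    qed
    finally show ?thesis by simp
  qed
  show ns: "z \<notin> mspectrum B"
  proof
    assume "z \<in> mspectrum B"
    then obtain v where v: "v \<noteq> 0" "B *v v = z *s v" by (auto simp: mspectrum_def)
    then have "(mat z - B) *v v = 0" by (simp add: mat_minus_mv)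
    then show False using key[of v] v(1) by simp
  qed
  show "opnorm (resolv B z) \<le> 2 * M"
  proof (rule opnorm_le)
    fix w
    show "norm (resolv B z *v w) \<le> 2 * M * norm w"
      using key[of "resolv B z *v w"] resolv_mv1[OF ns] by simp
  qed
qed

lemma resolv_diff:
  fixes A B :: "complex^'n^'n"
  assumes "z \<notin> mspectrum A" "z \<notin> mspectrum B"
  shows "resolv B z - resolv A z = resolv B z ** (B - A) ** resolv A z"
proof -
  have "B - A = (mat z - A) - (mat z - B)" by simp
  then have "resolv B z ** (B - A) ** resolv A z
      = resolv B z ** ((mat z - A) ** resolv A z) - (resolv B z ** (mat z - B)) ** resolv A z"
    by (simp add: mdiff_ldistrib mdiff_rdistrib matrix_mul_assoc)
  also have "\<dots> = resolv B z - resolv A z"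
    using assms by (simp add: resolv_left resolv_right)
  finally show ?thesis by simp
qed

lemma resolv_large:
  fixes X :: "complex^'n^'n"
  assumes "opnorm X < norm z"
  shows "z \<notin> mspectrum X" "opnorm (resolv X z) \<le> 1 / (norm z - opnorm X)"
proof -
  show ns: "z \<notin> mspectrum X" using eig_bound[of z X] assms by auto
  show "opnorm (resolv X z) \<le> 1 / (norm z - opnorm X)"
  proof (rule opnorm_le)
    fix w
    define v where "v = resolv X z *v w"
    have "z *s v - X *v v = w" using resolv_mv1[OF ns, of w] by (simp add: v_def mat_minus_mv)
    then have "z *s v = w + X *v v" by (simp add: algebra_simps)
    then have "norm z * norm v \<le> norm w + opnorm X * norm v"
      by (metis norm_smult_vec norm_triangle_ineq order.trans add_left_mono opnorm_mv)
    then have "(norm z - opnorm X) * norm v \<le> norm w" by (simp add: algebra_simps)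
    then show "norm (resolv X z *v w) \<le> 1 / (norm z - opnorm X) * norm w"
      using assms by (simp add: v_def field_simps)
  qed
qed

lemma resolv_entry_eq:
  assumes "z \<notin> mspectrum (X::complex^'n^'n)"
  shows "z * resolv X z $ i $ j = mat 1 $ i $ j + (X ** resolv X z) $ i $ j"
proof -
  have "((mat z - X) ** resolv X z) $ i $ j = mat 1 $ i $ j" using resolv_right[OF assms] by simp
  then show ?thesis by (simp add: mdiff_rdistrib mat_mult_entry algebra_simps)
qed

lemma resolv_entry_eq2:
  assumes "z \<notin> mspectrum (X::complex^'n^'n)"
  shows "z * resolv X z $ i $ j = mat 1 $ i $ j + (resolv X z ** X) $ i $ j"
proof -
  have "(resolv X z ** (mat z - X)) $ i $ j = mat 1 $ i $ j" using resolv_left[OF assms] by simp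
  then show ?thesis by (simp add: mdiff_ldistrib mult_mat_entry algebra_simps)
qed

lemma resolv_bounded_compact:
  fixes A :: "complex^'n^'n"
  assumes K: "compact K" "K \<inter> mspectrum A = {}"
  shows "\<exists>M. 0 \<le> M \<and> (\<forall>z\<in>K. opnorm (resolv A z) \<le> M)"
proof -
  have "\<forall>p. \<exists>b. \<forall>z\<in>K. norm (resolv A z $ fst p $ snd p) \<le> b"
  proof
    fix p :: "'n \<times> 'n"
    have "continuous_on K (\<lambda>z. resolv A z $ fst p $ snd p)"
      using resolv_holo[of A "fst p" "snd p"] K(2)
      by (meson holomorphic_on_imp_continuous_on holomorphic_on_subset disjoint_iff subsetI ComplI)
    then have "compact ((\<lambda>z. resolv A z $ fst p $ snd p) ` K)"
      using K(1) by (rule compact_continuous_image)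
    then obtain b where "\<forall>y\<in>(\<lambda>z. resolv A z $ fst p $ snd p) ` K. norm y \<le> b"
      using compact_imp_bounded bounded_iff by metis
    then show "\<exists>b. \<forall>z\<in>K. norm (resolv A z $ fst p $ snd p) \<le> b" by auto
  qed
  then obtain b where b: "\<And>p z. z \<in> K \<Longrightarrow> norm (resolv A z $ fst p $ snd p) \<le> b p"
    by metis
  define M where "M = (\<Sum>i\<in>UNIV. \<Sum>j\<in>UNIV. b (i, j))"
  have "opnorm (resolv A z) \<le> M" if "z \<in> K" for z
  proof -
    have "opnorm (resolv A z) \<le> (\<Sum>i\<in>UNIV. \<Sum>j\<in>UNIV. norm (resolv A z $ i $ j))"
      by (rule opnorm_le_entries)
    also have "\<dots> \<le> M" unfolding M_def
      using b[OF that] by (intro sum_mono) (metis fst_conv snd_conv)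
    finally show ?thesis .
  qed
  then show ?thesis
    by (intro exI[of _ "max M 0"]) (auto intro: order.trans[OF _ max.cobounded1])
qed

lemma spec_near:
  fixes A :: "complex^'n^'n"
  assumes U: "open U" "mspectrum A \<subseteq> U"
  shows "\<exists>\<delta>>0. \<forall>B. opnorm (B - A) < \<delta> \<longrightarrow> mspectrum B \<subseteq> U"
proof -
  define K where "K = cball 0 (opnorm A + 1) - U"
  have cK: "compact K" unfolding K_def using U(1) by (intro compact_diff) auto
  have "K \<inter> mspectrum A = {}" using U(2) by (auto simp: K_def)
  from resolv_bounded_compact[OF cK this] obtain M where M: "0 \<le> M" "\<forall>z\<in>K. opnorm (resolv A z) \<le> M"
    by blast
  define \<delta> where "\<delta> = min (1/2) (1 / (2 * (M + 1)))"
  have \<delta>0: "\<delta> > 0" using M(1) by (simp add: \<delta>_def)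
  have "mspectrum B \<subseteq> U" if B: "opnorm (B - A) < \<delta>" for B
  proof
    fix z assume zB: "z \<in> mspectrum B"
    show "z \<in> U"
    proof (rule ccontr)
      assume zU: "z \<notin> U"
      show False
      proof (cases "norm z \<le> opnorm A + 1")
        case True
        then have zK: "z \<in> K" using zU by (simp add: K_def)
        then have zA: "z \<notin> mspectrum A" using U(2) zU by auto
        have "opnorm (B - A) * (M + 1) \<le> 1/2"
        proof -
          have "opnorm (B - A) * (M + 1) \<le> (1 / (2 * (M + 1))) * (M + 1)"
            using B M(1) by (intro mult_right_mono) (auto simp: \<delta>_def)
          also have "\<dots> = 1/2" using M(1) by (simp add: field_simps)
          finally show ?thesis .
        qed
        moreover have "opnorm (resolv A z) \<le> M + 1" using M(2) zK by fastforce
        ultimately show False using resolv_perturb(1)[OF zA] zB by blast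
      next
        case False
        then have lt: "opnorm A < norm z" by simp
        have zA: "z \<notin> mspectrum A" using resolv_large(1)[OF lt] .
        have "opnorm (resolv A z) \<le> 1 / (norm z - opnorm A)" using resolv_large(2)[OF lt] .
        also have "\<dots> \<le> 1" using False by (simp add: field_simps)
        finally have r1: "opnorm (resolv A z) \<le> 1" .
        have "opnorm (B - A) * 1 \<le> 1/2" using B by (simp add: \<delta>_def)
        then show False using resolv_perturb(1)[OF zA r1] zB by blast
      qed
    qed
  qed
  then show ?thesis using \<delta>0 by blast
qed



lemma circle_residues:
  fixes f :: "complex \<Rightarrow> complex"
  assumes pts: "finite pts" and holo: "f holomorphic_on (- pts)" and r: "0 < r"
    and sph: "sphere c r \<inter> pts = {}"
  shows "contour_integral (circlepath c r) f = 2 * pi * \<i> * (\<Sum>p\<in>pts \<inter> ball c r. residue f p)"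
proof -
  have pi: "path_image (circlepath c r) = sphere c r" using r by (simp add: path_image_circlepath_nonneg)
  have "contour_integral (circlepath c r) f =
      2 * pi * \<i> * (\<Sum>p\<in>pts. winding_number (circlepath c r) p * residue f p)"
    by (rule Residue_theorem[of UNIV pts]) (use pts holo sph pi in \<open>auto simp: Compl_eq_Diff_UNIV\<close>)
  also have "(\<Sum>p\<in>pts. winding_number (circlepath c r) p * residue f p) =
      (\<Sum>p\<in>pts. if p \<in> ball c r then residue f p else 0)"
  proof (intro sum.cong refl)
    fix p assume p: "p \<in> pts"
    show "winding_number (circlepath c r) p * residue f p = (if p \<in> ball c r then residue f p else 0)"
    proof (cases "p \<in> ball c r")
      case True
      then have "winding_number (circlepath c r) p = 1"
        by (intro winding_number_circlepath) (simp add: dist_norm norm_minus_commute)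
      then show ?thesis using True by simp
    next
      case False
      then have "p \<notin> cball c r" using p sph by auto
      then have "winding_number (circlepath c r) p = 0"
        by (intro winding_number_zero_outside[of _ "cball c r"]) (use r in \<open>auto simp: pi\<close>)
      then show ?thesis using False by simp
    qed
  qed
  also have "\<dots> = (\<Sum>p\<in>pts \<inter> ball c r. residue f p)" by (simp add: sum.inter_restrict[OF pts])
  finally show ?thesis .
qed

lemma open_resolvent_set: "open (- mspectrum (X::complex^'n^'n))"
  using finite_spec[of X] by (simp add: finite_imp_closed open_Compl)

lemma resolv_integrable:
  assumes "path_image g \<subseteq> - mspectrum X" "valid_path g" "f holomorphic_on (- mspectrum (X::complex^'n^'n))"
  shows "(\<lambda>z. f z * resolv X z $ i $ j) contour_integrable_on g"
  by (rule contour_integrable_holomorphic_simple[OF _ open_resolvent_set assms(2,1)])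
     (intro holomorphic_intros assms(3) resolv_holo)

lemma big_circle_sphere:
  assumes "opnorm (X::complex^'n^'n) < R"
  shows "sphere 0 R \<inter> mspectrum X = {}" "mspectrum X \<subseteq> ball 0 R"
  using eig_bound[of _ X] assms by fastforce+

lemma big_circle_k0:
  fixes X :: "complex^'n^'n"
  assumes R: "opnorm X < R"
  shows "contour_integral (circlepath 0 R) (\<lambda>z. resolv X z $ i $ j) = 2 * pi * \<i> * mat 1 $ i $ j"
proof -
  define f where "f z = resolv X z $ i $ j" for z
  define C where "C = 2 * pi * \<i> * (\<Sum>p\<in>mspectrum X. residue f p)"
  define m where "m = opnorm X"
  define \<delta> where "\<delta> = (mat 1 :: complex^'n^'n) $ i $ j"
  have m0: "0 \<le> m" by (simp add: m_def opnorm_nonneg)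
  have fholo: "f holomorphic_on - mspectrum X" unfolding f_def by (rule resolv_holo)
  have IC: "contour_integral (circlepath 0 r) f = C" if r: "m < r" for r
  proof -
    have "contour_integral (circlepath 0 r) f = 2 * pi * \<i> * (\<Sum>p\<in>mspectrum X \<inter> ball 0 r. residue f p)"
      using big_circle_sphere[of X r] r m0 unfolding m_def
      by (intro circle_residues finite_spec fholo) auto
    also have "mspectrum X \<inter> ball 0 r = mspectrum X" using big_circle_sphere(2)[of X r] r by (auto simp: m_def)
    finally show ?thesis by (simp add: C_def)
  qed
  have bound: "norm (C - 2 * pi * \<i> * \<delta>) \<le> 2 * pi * m / (r - m)" if r: "m < r" for r
  proof -
    have r0: "0 < r" using r m0 by linarith
    have pi: "path_image (circlepath 0 r) = sphere 0 r" using r0 by (simp add: path_image_circlepath_nonneg)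
    have int1: "(f has_contour_integral C) (circlepath 0 r)"
      using IC[OF r] resolv_integrable[of "circlepath 0 r" X "\<lambda>z. 1" i j] big_circle_sphere[of X r] r pi
      by (metis (no_types, lifting) ext Compl_iff disjoint_iff f_def has_contour_integral_integral
          holomorphic_on_const m_def mult_1 subsetI valid_path_circlepath)
    have int2: "((\<lambda>z. \<delta> / (z - 0)) has_contour_integral 2 * pi * \<i> * \<delta>) (circlepath 0 r)"
      using Cauchy_integral_circlepath_simple[of "\<lambda>z. \<delta>" 0 r 0] r0 by simp
    have int3: "((\<lambda>z. f z - \<delta> / (z - 0)) has_contour_integral C - 2 * pi * \<i> * \<delta>) (circlepath 0 r)"
      by (rule has_contour_integral_diff[OF int1 int2])
    have "norm (C - 2 * pi * \<i> * \<delta>) \<le> (m / (r * (r - m))) * (2 * pi * r)"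
    proof (rule has_contour_integral_bound_circlepath[OF int3 _ r0])
      show "0 \<le> m / (r * (r - m))" using r r0 m0 by simp
      fix z :: complex assume z: "norm (z - 0) = r"
      have zr: "norm z = r" using z by simp
      have ml: "opnorm X < norm z" using zr r by (simp add: m_def)
      have z0: "z \<noteq> 0" using zr r0 by auto
      have ns: "z \<notin> mspectrum X" by (rule resolv_large(1)[OF ml])
      have "f z - \<delta> / (z - 0) = (resolv X z ** X) $ i $ j / z"
        using resolv_entry_eq2[OF ns, of i j] z0 by (simp add: f_def \<delta>_def field_simps)
      also have "norm \<dots> \<le> opnorm (resolv X z ** X) / r"
        using entry_le_opnorm[of "resolv X z ** X" i j] zr r0 by (simp add: norm_divide divide_right_mono)
      also have "\<dots> \<le> (opnorm (resolv X z) * m) / r"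
        using opnorm_mult[of "resolv X z" X] r0 by (simp add: m_def divide_right_mono)
      also have "\<dots> \<le> ((1 / (r - m)) * m) / r"
        using resolv_large(2)[OF ml] zr m0 r0 by (intro divide_right_mono mult_right_mono) (auto simp: m_def)
      also have "\<dots> = m / (r * (r - m))" by (simp add: field_simps)
      finally show "norm (f z - \<delta> / (z - 0)) \<le> m / (r * (r - m))" .
    qed
    also have "\<dots> = 2 * pi * m / (r - m)"
    proof -
      have "r - m \<noteq> 0" using r by simp
      then show ?thesis using r0 by (simp add: field_simps)
    qed
    finally show ?thesis .
  qed
  have "C = 2 * pi * \<i> * \<delta>"
  proof (rule ccontr)
    assume "C \<noteq> 2 * pi * \<i> * \<delta>"
    then have e: "norm (C - 2 * pi * \<i> * \<delta>) > 0" by simp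
    define e where "e = norm (C - 2 * pi * \<i> * \<delta>)"
    define r where "r = m + 1 + 4 * pi * m / e"
    have e0: "e > 0" using e by (simp add: e_def)
    have rm: "r - m = 1 + 4 * pi * m / e" by (simp add: r_def)
    have "0 \<le> 4 * pi * m / e" using e0 m0 by simp
    then have rm0: "r - m > 0" by (simp add: rm)
    have "4 * pi * m \<le> e * (r - m)" using e0 by (simp add: rm field_simps)
    then have "2 * pi * m / (r - m) \<le> e / 2" using rm0 by (simp add: field_simps)
    moreover have "e \<le> 2 * pi * m / (r - m)" unfolding e_def using rm0 by (intro bound) simp
    ultimately show False using e0 by simp
  qed
  then show ?thesis using IC[of R] R unfolding f_def m_def \<delta>_def by simp
qed



lemma big_circle_path:
  assumes "opnorm (X::complex^'n^'n) < R"
  shows "path_image (circlepath 0 R) \<subseteq> - mspectrum X"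
proof -
  have "0 \<le> R" using assms opnorm_nonneg[of X] by linarith
  then show ?thesis using big_circle_sphere(1)[OF assms] by (auto simp: path_image_circlepath_nonneg)
qed

lemma big_circle_pow:
  fixes X :: "complex^'n^'n"
  assumes R: "opnorm X < R"
  shows "contour_integral (circlepath 0 R) (\<lambda>z. z^k * resolv X z $ i $ j) = 2 * pi * \<i> * mpow X k $ i $ j"
proof (induction k arbitrary: i j)
  case 0
  then show ?case using big_circle_k0[OF R] by simp
next
  case (Suc k)
  have pim: "path_image (circlepath 0 R) \<subseteq> - mspectrum X" by (rule big_circle_path[OF R])
  have h1: "((\<lambda>z. z^k * mat 1 $ i $ j) has_contour_integral 0) (circlepath 0 R)"
    by (rule Cauchy_theorem_convex_simple[of _ UNIV]) (auto intro!: holomorphic_intros)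
  have h2: "((\<lambda>z. z^k * resolv X z $ l $ j) has_contour_integral 2 * pi * \<i> * mpow X k $ l $ j) (circlepath 0 R)" for l
    using has_contour_integral_integral[OF resolv_integrable[OF pim valid_path_circlepath, of "\<lambda>z. z^k" l j]]
    by (simp add: Suc.IH holomorphic_intros)
  have h3: "((\<lambda>z. z^k * mat 1 $ i $ j + (\<Sum>l\<in>UNIV. X $ i $ l * (z^k * resolv X z $ l $ j)))
      has_contour_integral 0 + (\<Sum>l\<in>UNIV. X $ i $ l * (2 * pi * \<i> * mpow X k $ l $ j))) (circlepath 0 R)"
    by (intro has_contour_integral_add h1 has_contour_integral_sum has_contour_integral_lmul h2) auto
  have eq: "z^(Suc k) * resolv X z $ i $ j = z^k * mat 1 $ i $ j + (\<Sum>l\<in>UNIV. X $ i $ l * (z^k * resolv X z $ l $ j))"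
    if "z \<in> path_image (circlepath 0 R)" for z
  proof -
    have ns: "z \<notin> mspectrum X" using that pim by auto
    have "z^(Suc k) * resolv X z $ i $ j = z^k * (z * resolv X z $ i $ j)" by simp
    also have "\<dots> = z^k * (mat 1 $ i $ j + (X ** resolv X z) $ i $ j)" by (simp add: resolv_entry_eq[OF ns])
    also have "\<dots> = z^k * mat 1 $ i $ j + (\<Sum>l\<in>UNIV. X $ i $ l * (z^k * resolv X z $ l $ j))"
      by (simp add: matrix_matrix_mult_def distrib_left sum_distrib_left algebra_simps)
    finally show ?thesis .
  qed
  have "((\<lambda>z. z^(Suc k) * resolv X z $ i $ j) has_contour_integral
      (\<Sum>l\<in>UNIV. X $ i $ l * (2 * pi * \<i> * mpow X k $ l $ j))) (circlepath 0 R)"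
    using has_contour_integral_eq[OF h3, of "\<lambda>z. z^(Suc k) * resolv X z $ i $ j"] eq by simp
  moreover have "(\<Sum>l\<in>UNIV. X $ i $ l * (2 * pi * \<i> * mpow X k $ l $ j)) = 2 * pi * \<i> * mpow X (Suc k) $ i $ j"
    by (simp add: matrix_matrix_mult_def sum_distrib_left algebra_simps)
  ultimately show ?case by (simp add: contour_integral_unique)
qed

lemma poly_mat_entry: "poly_mat q X $ i $ j = (\<Sum>k\<le>degree q. coeff q k * mpow X k $ i $ j)"
  by (simp add: poly_mat_def sum_component mat_mult_entry)

lemma big_circle_poly:
  fixes X :: "complex^'n^'n"
  assumes R: "opnorm X < R"
  shows "contour_integral (circlepath 0 R) (\<lambda>z. poly q z * resolv X z $ i $ j) = 2 * pi * \<i> * poly_mat q X $ i $ j"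
proof -
  have pim: "path_image (circlepath 0 R) \<subseteq> - mspectrum X" by (rule big_circle_path[OF R])
  have h: "((\<lambda>z. z^k * resolv X z $ i $ j) has_contour_integral 2 * pi * \<i> * mpow X k $ i $ j) (circlepath 0 R)" for k
    using has_contour_integral_integral[OF resolv_integrable[OF pim valid_path_circlepath, of "\<lambda>z. z^k" i j]]
    by (simp add: big_circle_pow[OF R] holomorphic_intros)
  have "((\<lambda>z. \<Sum>k\<le>degree q. coeff q k * (z^k * resolv X z $ i $ j)) has_contour_integral
      (\<Sum>k\<le>degree q. coeff q k * (2 * pi * \<i> * mpow X k $ i $ j))) (circlepath 0 R)"
    by (intro has_contour_integral_sum has_contour_integral_lmul h) auto
  moreover have "(\<lambda>z. \<Sum>k\<le>degree q. coeff q k * (z^k * resolv X z $ i $ j)) = (\<lambda>z. poly q z * resolv X z $ i $ j)"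
    by (rule ext) (simp add: poly_altdef sum_distrib_left mult_ac)
  moreover have "(\<Sum>k\<le>degree q. coeff q k * (2 * pi * \<i> * mpow X k $ i $ j)) = 2 * pi * \<i> * poly_mat q X $ i $ j"
    by (simp add: poly_mat_entry sum_distrib_left algebra_simps)
  ultimately show ?thesis by (simp add: contour_integral_unique)
qed

lemma multi_circle:
  fixes X :: "complex^'n^'n"
  assumes L: "finite L" and rho: "0 < \<rho>"
    and disj: "\<And>a b. a \<in> L \<Longrightarrow> b \<in> L \<Longrightarrow> a \<noteq> b \<Longrightarrow> ball a \<rho> \<inter> ball b \<rho> = {}"
    and spec: "mspectrum X \<subseteq> (\<Union>a\<in>L. ball a \<rho>)"
    and sph: "\<And>a. a \<in> L \<Longrightarrow> sphere a \<rho> \<inter> mspectrum X = {}"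
  shows "(\<Sum>a\<in>L. contour_integral (circlepath a \<rho>) (\<lambda>z. poly q z * resolv X z $ i $ j))
          = 2 * pi * \<i> * poly_mat q X $ i $ j"
proof -
  define f where "f z = poly q z * resolv X z $ i $ j" for z
  have fholo: "f holomorphic_on - mspectrum X" unfolding f_def
    by (intro holomorphic_intros poly_holo resolv_holo)
  have fin: "finite (mspectrum X)" by (rule finite_spec)
  have "(\<Sum>a\<in>L. contour_integral (circlepath a \<rho>) f)
      = (\<Sum>a\<in>L. 2 * pi * \<i> * (\<Sum>p\<in>mspectrum X \<inter> ball a \<rho>. residue f p))"
    by (intro sum.cong refl circle_residues fin fholo rho sph)
  also have "\<dots> = 2 * pi * \<i> * (\<Sum>a\<in>L. \<Sum>p\<in>mspectrum X \<inter> ball a \<rho>. residue f p)"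
    by (simp add: sum_distrib_left)
  also have "(\<Sum>a\<in>L. \<Sum>p\<in>mspectrum X \<inter> ball a \<rho>. residue f p) = (\<Sum>p\<in>(\<Union>a\<in>L. mspectrum X \<inter> ball a \<rho>). residue f p)"
    by (rule sum.UNION_disjoint[symmetric]) (use L fin disj in auto)
  also have "(\<Union>a\<in>L. mspectrum X \<inter> ball a \<rho>) = mspectrum X" using spec by auto
  finally have 1: "(\<Sum>a\<in>L. contour_integral (circlepath a \<rho>) f) = 2 * pi * \<i> * (\<Sum>p\<in>mspectrum X. residue f p)" .
  define R where "R = opnorm X + 1"
  have R: "opnorm X < R" by (simp add: R_def)
  have R0: "0 < R" using opnorm_nonneg[of X] by (simp add: R_def)
  have "contour_integral (circlepath 0 R) f = 2 * pi * \<i> * (\<Sum>p\<in>mspectrum X \<inter> ball 0 R. residue f p)"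
    by (intro circle_residues fin fholo R0 big_circle_sphere(1)[OF R])
  also have "mspectrum X \<inter> ball 0 R = mspectrum X" using big_circle_sphere(2)[OF R] by auto
  finally have 2: "contour_integral (circlepath 0 R) f = 2 * pi * \<i> * (\<Sum>p\<in>mspectrum X. residue f p)" .
  have 3: "contour_integral (circlepath 0 R) f = 2 * pi * \<i> * poly_mat q X $ i $ j"
    unfolding f_def by (rule big_circle_poly[OF R])
  show ?thesis using 1 2 3 unfolding f_def by simp
qed



lemma entry_estimate:
  fixes A B :: "complex^'n^'n" and \<rho> E :: real
  assumes L: "finite L" and rho: "0 < \<rho>"
    and disj: "\<And>a b. a \<in> L \<Longrightarrow> b \<in> L \<Longrightarrow> a \<noteq> b \<Longrightarrow> ball a \<rho> \<inter> ball b \<rho> = {}"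
    and specA: "mspectrum A \<subseteq> (\<Union>a\<in>L. ball a \<rho>)"
    and specB: "mspectrum B \<subseteq> (\<Union>a\<in>L. ball a \<rho>)"
    and sphA: "\<And>a. a \<in> L \<Longrightarrow> sphere a \<rho> \<inter> mspectrum A = {}"
    and sphB: "\<And>a. a \<in> L \<Longrightarrow> sphere a \<rho> \<inter> mspectrum B = {}"
    and E: "0 \<le> E" "\<And>a z. a \<in> L \<Longrightarrow> z \<in> sphere a \<rho> \<Longrightarrow> opnorm (resolv B z ** (B - A) ** resolv A z) \<le> E"
    and qb: "\<And>a z. a \<in> L \<Longrightarrow> z \<in> sphere a \<rho> \<Longrightarrow> norm (poly q z) \<le> 1"
  shows "norm ((poly_mat q B - poly_mat q A) $ i $ j) \<le> card L * \<rho> * E"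
proof -
  define fA where "fA z = poly q z * resolv A z $ i $ j" for z
  define fB where "fB z = poly q z * resolv B z $ i $ j" for z
  have pim: "path_image (circlepath a \<rho>) = sphere a \<rho>" for a using rho by (simp add: path_image_circlepath_nonneg)
  have intA: "fA contour_integrable_on circlepath a \<rho>" if "a \<in> L" for a
    unfolding fA_def using sphA[OF that] pim
    by (intro resolv_integrable poly_holo valid_path_circlepath) auto
  have intB: "fB contour_integrable_on circlepath a \<rho>" if "a \<in> L" for a
    unfolding fB_def using sphB[OF that] pim
    by (intro resolv_integrable poly_holo valid_path_circlepath) auto
  have "2 * pi * \<i> * (poly_mat q B - poly_mat q A) $ i $ j =
      2 * pi * \<i> * poly_mat q B $ i $ j - 2 * pi * \<i> * poly_mat q A $ i $ j"
    by (simp add: algebra_simps)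
  also have "\<dots> = (\<Sum>a\<in>L. contour_integral (circlepath a \<rho>) fB) - (\<Sum>a\<in>L. contour_integral (circlepath a \<rho>) fA)"
    unfolding fA_def fB_def
    by (simp add: multi_circle[OF L rho disj specA sphA] multi_circle[OF L rho disj specB sphB])
  also have "\<dots> = (\<Sum>a\<in>L. contour_integral (circlepath a \<rho>) (\<lambda>z. fB z - fA z))"
    by (simp add: sum_subtractf contour_integral_diff intA intB)
  finally have eq: "2 * pi * \<i> * (poly_mat q B - poly_mat q A) $ i $ j =
      (\<Sum>a\<in>L. contour_integral (circlepath a \<rho>) (\<lambda>z. fB z - fA z))" .
  have each: "norm (contour_integral (circlepath a \<rho>) (\<lambda>z. fB z - fA z)) \<le> E * (2 * pi * \<rho>)"
    if a: "a \<in> L" for a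
  proof (rule has_contour_integral_bound_circlepath[OF has_contour_integral_integral E(1) rho])
    show "(\<lambda>z. fB z - fA z) contour_integrable_on circlepath a \<rho>"
      by (intro contour_integrable_diff intA intB a)
    fix z assume "norm (z - a) = \<rho>"
    then have zs: "z \<in> sphere a \<rho>" by (simp add: dist_norm norm_minus_commute)
    have nA: "z \<notin> mspectrum A" using sphA[OF a] zs by auto
    have nB: "z \<notin> mspectrum B" using sphB[OF a] zs by auto
    have "fB z - fA z = poly q z * (resolv B z - resolv A z) $ i $ j"
      by (simp add: fA_def fB_def algebra_simps)
    also have "\<dots> = poly q z * (resolv B z ** (B - A) ** resolv A z) $ i $ j"
      by (simp add: resolv_diff[OF nA nB])
    finally have "norm (fB z - fA z) = norm (poly q z) * norm ((resolv B z ** (B - A) ** resolv A z) $ i $ j)"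
      by (simp add: norm_mult)
    also have "\<dots> \<le> 1 * E"
      using qb[OF a zs] E(2)[OF a zs] entry_le_opnorm[of "resolv B z ** (B - A) ** resolv A z" i j]
      by (intro mult_mono) auto
    finally show "norm (fB z - fA z) \<le> E" by simp
  qed
  have "2 * pi * norm ((poly_mat q B - poly_mat q A) $ i $ j) = norm (2 * pi * \<i> * (poly_mat q B - poly_mat q A) $ i $ j)"
    by (simp add: norm_mult)
  also have "\<dots> \<le> (\<Sum>a\<in>L. norm (contour_integral (circlepath a \<rho>) (\<lambda>z. fB z - fA z)))"
    unfolding eq by (rule norm_sum)
  also have "\<dots> \<le> (\<Sum>a\<in>L. E * (2 * pi * \<rho>))" by (intro sum_mono each)
  also have "\<dots> = 2 * pi * (card L * \<rho> * E)" by simp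
  finally show ?thesis by simp
qed



lemma choose_rho:
  fixes L :: "complex set"
  assumes "finite L" "L \<subseteq> interior S"
  shows "\<exists>\<rho>>0. (\<forall>a\<in>L. cball a \<rho> \<subseteq> S) \<and> (\<forall>a\<in>L. \<forall>b\<in>L. a \<noteq> b \<longrightarrow> 2 * \<rho> < dist a b)"
  using assms
proof (induction L rule: finite_induct)
  case empty then show ?case by (intro exI[of _ 1]) auto
next
  case (insert x F)
  then obtain \<rho> where \<rho>: "\<rho> > 0" "\<forall>a\<in>F. cball a \<rho> \<subseteq> S" "\<forall>a\<in>F. \<forall>b\<in>F. a \<noteq> b \<longrightarrow> 2 * \<rho> < dist a b"
    by auto
  have "x \<in> interior S" using insert by auto
  then obtain e where e: "e > 0" "cball x e \<subseteq> S" using mem_interior_cball by blast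
  define d where "d = Min (insert 1 (dist x ` F))"
  have d0: "d > 0" unfolding d_def using insert(1,2) by (subst Min_gr_iff) auto
  have dle: "d \<le> dist x b" if "b \<in> F" for b unfolding d_def using insert(1) that by (intro Min_le) auto
  define \<rho>' where "\<rho>' = min \<rho> (min e (d / 3))"
  have "\<rho>' > 0" using \<rho>(1) e(1) d0 by (simp add: \<rho>'_def)
  moreover have "\<forall>a\<in>insert x F. cball a \<rho>' \<subseteq> S"
  proof
    fix a assume "a \<in> insert x F"
    then show "cball a \<rho>' \<subseteq> S"
    proof
      assume "a = x"
      moreover have "cball x \<rho>' \<subseteq> cball x e" by (intro subset_cball) (simp add: \<rho>'_def)
      ultimately show ?thesis using e(2) by blast
    next
      assume "a \<in> F"
      moreover have "cball a \<rho>' \<subseteq> cball a \<rho>" by (intro subset_cball) (simp add: \<rho>'_def)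
      ultimately show ?thesis using \<rho>(2) by blast
    qed
  qed
  moreover have "\<forall>a\<in>insert x F. \<forall>b\<in>insert x F. a \<noteq> b \<longrightarrow> 2 * \<rho>' < dist a b"
  proof (intro ballI impI)
    fix a b assume a: "a \<in> insert x F" and b: "b \<in> insert x F" and ab: "a \<noteq> b"
    have r1: "2 * \<rho>' \<le> 2 * \<rho>" and r2: "2 * \<rho>' \<le> 2 * (d / 3)" by (auto simp: \<rho>'_def)
    show "2 * \<rho>' < dist a b"
    proof (cases "a = x")
      case True
      then have "b \<in> F" using b ab by auto
      then show ?thesis using dle[of b] True r2 d0 by auto
    next
      case False
      then have aF: "a \<in> F" using a by auto
      show ?thesis
      proof (cases "b = x")
        case True
        then show ?thesis using dle[of a] aF r2 d0 by (auto simp: dist_commute)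
      next
        case False
        then have "b \<in> F" using b by auto
        then have "2 * \<rho> < dist a b" using \<rho>(3) aF ab by blast
        then show ?thesis using r1 by linarith
      qed
    qed
  qed
  ultimately show ?case by blast
qed

lemma equicont:
  fixes A :: "complex^'n^'n"
  assumes K: "mspectrum A \<subseteq> interior (numrange A)"
  shows "\<exists>C \<delta>. \<delta> > 0 \<and> (\<forall>B q. opnorm (B - A) < \<delta> \<longrightarrow> (\<forall>z\<in>numrange A. norm (poly q z) \<le> 1) \<longrightarrow>
            opnorm (poly_mat q B - poly_mat q A) \<le> C * opnorm (B - A))"
proof -
  define L where "L = mspectrum A"
  have Lf: "finite L" by (simp add: L_def finite_spec)
  obtain \<rho> where \<rho>: "\<rho> > 0" "\<forall>a\<in>L. cball a \<rho> \<subseteq> numrange A" "\<forall>a\<in>L. \<forall>b\<in>L. a \<noteq> b \<longrightarrow> 2 * \<rho> < dist a b"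
    using choose_rho[OF Lf K[folded L_def]] by blast
  define U where "U = (\<Union>a\<in>L. ball a \<rho>)"
  have Uo: "open U" by (simp add: U_def open_UN)
  have LU: "mspectrum A \<subseteq> U" using \<rho>(1) by (auto simp: U_def L_def)
  have disj: "ball a \<rho> \<inter> ball b \<rho> = {}" if "a \<in> L" "b \<in> L" "a \<noteq> b" for a b
  proof -
    have "2 * \<rho> < dist a b" using \<rho>(3) that by auto
    show ?thesis
    proof (rule ccontr)
      assume "ball a \<rho> \<inter> ball b \<rho> \<noteq> {}"
      then obtain z where z: "dist a z < \<rho>" "dist b z < \<rho>" by auto
      have "dist a b \<le> dist a z + dist z b" by (rule dist_triangle)
      moreover have "dist z b = dist b z" by (rule dist_commute)
      ultimately show False using z \<open>2 * \<rho> < dist a b\<close> by linarith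
    qed
  qed
  have sphU: "z \<notin> U" if "a \<in> L" "z \<in> sphere a \<rho>" for a z
  proof
    assume "z \<in> U"
    then obtain b where b: "b \<in> L" "dist b z < \<rho>" by (auto simp: U_def)
    have daz: "dist a z = \<rho>" using that by simp
    show False
    proof (cases "a = b")
      case True then show False using b daz by simp
    next
      case False
      then have "2 * \<rho> < dist a b" using \<rho>(3) that(1) b(1) by auto
      moreover have "dist a b \<le> dist a z + dist b z" using dist_triangle[of a b z] by (simp add: dist_commute)
      ultimately show False using b daz by linarith
    qed
  qed
  obtain \<delta>1 where \<delta>1: "\<delta>1 > 0" "\<forall>B. opnorm (B - A) < \<delta>1 \<longrightarrow> mspectrum B \<subseteq> U"
    using spec_near[OF Uo LU] by blast
  define \<Gamma> where "\<Gamma> = (\<Union>a\<in>L. sphere a \<rho>)"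
  have c\<Gamma>: "compact \<Gamma>" unfolding \<Gamma>_def using Lf by (intro compact_UN) auto
  have "\<Gamma> \<inter> mspectrum A = {}" using sphU LU by (auto simp: \<Gamma>_def)
  from resolv_bounded_compact[OF c\<Gamma> this] obtain M where M: "0 \<le> M" "\<forall>z\<in>\<Gamma>. opnorm (resolv A z) \<le> M"
    by blast
  define \<delta> where "\<delta> = min \<delta>1 (1 / (2 * (M + 1)))"
  define C where "C = real CARD('n) * real CARD('n) * (real (card L) * \<rho> * (2 * (M + 1) * M))"
  have "\<delta> > 0" using \<delta>1(1) M(1) by (simp add: \<delta>_def)
  moreover have "opnorm (poly_mat q B - poly_mat q A) \<le> C * opnorm (B - A)"
    if B: "opnorm (B - A) < \<delta>" and q: "\<forall>z\<in>numrange A. norm (poly q z) \<le> 1" for B q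
  proof -
    define E where "E = 2 * (M + 1) * opnorm (B - A) * M"
    have E0: "0 \<le> E" using M(1) opnorm_nonneg[of "B - A"] by (simp add: E_def)
    have specB: "mspectrum B \<subseteq> U" using \<delta>1(2) B by (auto simp: \<delta>_def)
    have d2: "opnorm (B - A) * (M + 1) \<le> 1/2"
    proof -
      have "opnorm (B - A) * (M + 1) \<le> (1 / (2 * (M + 1))) * (M + 1)"
        using B M(1) by (intro mult_right_mono) (auto simp: \<delta>_def)
      also have "\<dots> = 1/2" using M(1) by (simp add: field_simps)
      finally show ?thesis .
    qed
    have Eb: "opnorm (resolv B z ** (B - A) ** resolv A z) \<le> E" if a: "a \<in> L" and z: "z \<in> sphere a \<rho>" for a z
    proof -
      have z\<Gamma>: "z \<in> \<Gamma>" using a z by (auto simp: \<Gamma>_def)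
      have nA: "z \<notin> mspectrum A" using sphU[OF a z] LU by auto
      have RA: "opnorm (resolv A z) \<le> M" using M(2) z\<Gamma> by auto
      have RA1: "opnorm (resolv A z) \<le> M + 1" using RA by simp
      have RB: "opnorm (resolv B z) \<le> 2 * (M + 1)" by (rule resolv_perturb(2)[OF nA RA1 d2])
      have "opnorm (resolv B z ** (B - A) ** resolv A z) \<le> opnorm (resolv B z ** (B - A)) * opnorm (resolv A z)"
        by (rule opnorm_mult)
      also have "\<dots> \<le> (opnorm (resolv B z) * opnorm (B - A)) * M"
        by (intro mult_mono opnorm_mult RA opnorm_nonneg) (simp add: opnorm_nonneg)
      also have "\<dots> \<le> (2 * (M + 1) * opnorm (B - A)) * M"
        by (intro mult_right_mono RB M(1) opnorm_nonneg) 
      finally show ?thesis by (simp add: E_def)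
    qed
    have entry: "norm ((poly_mat q B - poly_mat q A) $ i $ j) \<le> card L * \<rho> * E" for i j
    proof (rule entry_estimate[OF Lf \<rho>(1)])
      show "\<And>a b. a \<in> L \<Longrightarrow> b \<in> L \<Longrightarrow> a \<noteq> b \<Longrightarrow> ball a \<rho> \<inter> ball b \<rho> = {}" by (rule disj)
      show "mspectrum A \<subseteq> (\<Union>a\<in>L. ball a \<rho>)" using LU by (simp add: U_def)
      show "mspectrum B \<subseteq> (\<Union>a\<in>L. ball a \<rho>)" using specB by (simp add: U_def)
      show "\<And>a. a \<in> L \<Longrightarrow> sphere a \<rho> \<inter> mspectrum A = {}" using sphU LU by blast
      show "\<And>a. a \<in> L \<Longrightarrow> sphere a \<rho> \<inter> mspectrum B = {}" using sphU specB by blast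
      show "0 \<le> E" by (rule E0)
      show "\<And>a z. a \<in> L \<Longrightarrow> z \<in> sphere a \<rho> \<Longrightarrow> opnorm (resolv B z ** (B - A) ** resolv A z) \<le> E"
        by (rule Eb)
      fix a z assume a: "a \<in> L" and z: "z \<in> sphere a \<rho>"
      then have "z \<in> cball a \<rho>" by simp
      then have "z \<in> numrange A" using \<rho>(2) a by blast
      then show "norm (poly q z) \<le> 1" using q by blast
    qed
    have "opnorm (poly_mat q B - poly_mat q A) \<le> (\<Sum>i\<in>UNIV. \<Sum>j\<in>UNIV. norm ((poly_mat q B - poly_mat q A) $ i $ j))"
      by (rule opnorm_le_entries)
    also have "\<dots> \<le> (\<Sum>i\<in>(UNIV::'n set). \<Sum>j\<in>(UNIV::'n set). card L * \<rho> * E)"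
      by (intro sum_mono entry)
    also have "\<dots> = C * opnorm (B - A)" by (simp add: C_def E_def algebra_simps)
    finally show ?thesis .
  qed
  ultimately show ?thesis by blast
qed



lemma spec_nonempty: "mspectrum (A::complex^'n^'n) \<noteq> {}"
proof
  assume e: "mspectrum A = {}"
  have "(\<Sum>a\<in>{}. contour_integral (circlepath a 1) (\<lambda>z. poly [:1:] z * resolv A z $ i $ i))
        = 2 * pi * \<i> * poly_mat [:1:] A $ i $ i" for i :: 'n
    by (rule multi_circle) (auto simp: e)
  then have "0 = 2 * pi * \<i> * (mat 1 :: complex^'n^'n) $ i $ i" for i :: 'n
    by (simp add: poly_mat_const)
  then show False by (simp add: mat_def)
qed

lemma Bn_eq1:
  fixes An :: "complex^'n^'n" and t :: real
  assumes "t \<noteq> 1"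
  shows "mat (complex_of_real t * z0) + (mat z0 + (An - mat z0) ** mat (1 / (1 - complex_of_real t))) ** mat (1 - complex_of_real t) = An"
proof -
  have "1 - complex_of_real t \<noteq> 0" using assms by (metis eq_iff_diff_eq_0 of_real_eq_1_iff)
  then show ?thesis
  proof -
    have me: "(mat (complex_of_real t * z0) :: complex^'n^'n) $ i $ j = complex_of_real t * mat z0 $ i $ j" for i j
      by (simp add: mat_def)
    have me2: "(mat (z0 * complex_of_real t) :: complex^'n^'n) $ i $ j = complex_of_real t * mat z0 $ i $ j" for i j
      by (simp add: mat_def)
    show ?thesis using \<open>1 - complex_of_real t \<noteq> 0\<close>
      by (simp add: vec_eq_iff mult_mat_entry me me2 field_simps)
  qed
qed

lemma Bn_eq2:
  fixes An A :: "complex^'n^'n" and t :: real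
  shows "(mat z0 + (An - mat z0) ** mat s) - A = (An - A) ** mat s + (A - mat z0) ** mat (s - 1)"
  by (simp add: vec_eq_iff mult_mat_entry algebra_simps)

lemma opnorm_tri2: "opnorm (X::complex^'n^'n) \<le> opnorm Y + opnorm (X - Y)"
  using opnorm_add[of Y "X - Y"] by simp

lemma step:
  fixes A An B :: "complex^'n^'n"
  assumes ball: "cball z0 r \<subseteq> numrange A" and r: "0 < r"
    and equi: "\<And>q. (\<forall>z\<in>numrange A. norm (poly q z) \<le> 1) \<Longrightarrow> opnorm (poly_mat q B - poly_mat q A) \<le> \<epsilon>"
    and psi: "\<And>q. (\<forall>z\<in>numrange A. norm (poly q z) \<le> 1) \<Longrightarrow> opnorm (poly_mat q A) \<le> c"
    and t: "0 \<le> t" "t \<le> 1"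
    and An: "opnorm (An - A) \<le> t * r"
    and BAn: "mat (complex_of_real t * z0) + B ** mat (1 - complex_of_real t) = An"
  shows "crouzeix_ratio An \<le> ereal (c + \<epsilon>)"
  unfolding crouzeix_ratio_def
proof (rule Sup_least, clarify)
  fix p assume p: "\<forall>z\<in>numrange An. norm (poly p z) \<le> 1"
  define q where "q = pcompose p [:complex_of_real t * z0, 1 - complex_of_real t:]"
  have qA: "\<forall>z\<in>numrange A. norm (poly q z) \<le> 1"
  proof
    fix z assume z: "z \<in> numrange A"
    have "(1 - t) *\<^sub>R z + t *\<^sub>R z0 \<in> numrange An" by (rule shrink[OF r ball t An z])
    moreover have "poly q z = poly p ((1 - t) *\<^sub>R z + t *\<^sub>R z0)"
      by (simp add: q_def poly_pcompose scaleR_conv_of_real algebra_simps)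
    ultimately show "norm (poly q z) \<le> 1" using p by simp
  qed
  have "poly_mat q B = poly_mat p An"
    by (simp add: q_def poly_mat_pcompose poly_mat_linear BAn)
  then have "opnorm (poly_mat p An) \<le> opnorm (poly_mat q A) + opnorm (poly_mat q B - poly_mat q A)"
    using opnorm_tri2[of "poly_mat q B" "poly_mat q A"] by simp
  also have "\<dots> \<le> c + \<epsilon>" by (intro add_mono psi equi qA)
  finally show "ereal (opnorm (poly_mat p An)) \<le> ereal (c + \<epsilon>)" by simp
qed



theorem theorem2p2:
  fixes A :: "complex^'n^'n" and As :: "nat \<Rightarrow> complex^'n^'n"
  assumes "mspectrum A \<subseteq> interior (numrange A)"
    and "(\<lambda>n. opnorm (As n - A)) \<longlonglongrightarrow> 0"
  shows "limsup (\<lambda>n. crouzeix_ratio (As n)) \<le> crouzeix_ratio A"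
proof -
  obtain z0 where z0: "z0 \<in> mspectrum A" using spec_nonempty by blast
  then obtain r where r: "r > 0" "cball z0 r \<subseteq> numrange A"
    using assms(1) mem_interior_cball by blast
  obtain C \<delta> where \<delta>: "\<delta> > 0" and equi: "\<And>B q. opnorm (B - A) < \<delta> \<Longrightarrow> (\<forall>z\<in>numrange A. norm (poly q z) \<le> 1) \<Longrightarrow>
      opnorm (poly_mat q B - poly_mat q A) \<le> C * opnorm (B - A)"
    using equicont[OF assms(1)] by blast
  define C' where "C' = max C 0"
  have C'0: "0 \<le> C'" by (simp add: C'_def)
  have psi0: "ereal 0 \<le> crouzeix_ratio A"
  proof -
    have "ereal (opnorm (poly_mat 0 A)) \<in> {ereal (opnorm (poly_mat p A)) | p. \<forall>z\<in>numrange A. norm (poly p z) \<le> 1}"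
      by (intro CollectI exI[of _ 0]) simp
    then have "ereal (opnorm (poly_mat 0 A)) \<le> crouzeix_ratio A"
      unfolding crouzeix_ratio_def by (rule Sup_upper)
    moreover have "opnorm (poly_mat 0 A) = 0"
      using opnorm_le[of "poly_mat 0 A" 0] opnorm_nonneg[of "poly_mat 0 A"] by simp
    ultimately show ?thesis by simp
  qed
  show ?thesis
  proof (cases "crouzeix_ratio A = \<infinity>")
    case True then show ?thesis by simp
  next
    case False
    then obtain c where c: "crouzeix_ratio A = ereal c" using psi0 by (cases "crouzeix_ratio A") auto
    have psi: "opnorm (poly_mat q A) \<le> c" if q: "\<forall>z\<in>numrange A. norm (poly q z) \<le> 1" for q
    proof -
      have "ereal (opnorm (poly_mat q A)) \<in> {ereal (opnorm (poly_mat p A)) | p. \<forall>z\<in>numrange A. norm (poly p z) \<le> 1}"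
        using q by auto
      then have "ereal (opnorm (poly_mat q A)) \<le> crouzeix_ratio A"
        unfolding crouzeix_ratio_def by (rule Sup_upper)
      then show ?thesis by (simp add: c)
    qed
    show ?thesis unfolding c
    proof (rule ereal_le_epsilon2)
      fix \<epsilon> :: real assume \<epsilon>: "0 < \<epsilon>"
      define a where "a = opnorm (A - mat z0)"
      have a0: "0 \<le> a" by (simp add: a_def opnorm_nonneg)
      define \<eta> where "\<eta> = min (\<delta> / 2) (\<epsilon> / (C' + 1))"
      have \<eta>0: "\<eta> > 0" using \<delta> \<epsilon> C'0 by (simp add: \<eta>_def)
      define t where "t = min (1/2) (\<eta> / (4 * (a + 1)))"
      have t0: "0 < t" using \<eta>0 a0 by (simp add: t_def)
      have t1: "t \<le> 1/2" unfolding t_def by (rule min.cobounded1)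
      have at: "2 * a * t \<le> \<eta> / 2"
      proof -
        have "t \<le> \<eta> / (4 * (a + 1))" by (simp add: t_def)
        then have "2 * a * t \<le> 2 * a * (\<eta> / (4 * (a + 1)))" using a0 by (intro mult_left_mono) auto
        also have "\<dots> \<le> 2 * (a + 1) * (\<eta> / (4 * (a + 1)))" using a0 \<eta>0 by (intro mult_right_mono) auto
        also have "\<dots> = \<eta> / 2" using a0 by (simp add: field_simps)
        finally show ?thesis .
      qed
      define \<kappa> where "\<kappa> = min (t * r) (\<eta> / 4)"
      have \<kappa>0: "\<kappa> > 0" using t0 r(1) \<eta>0 by (simp add: \<kappa>_def)
      have ev: "eventually (\<lambda>n. opnorm (As n - A) < \<kappa>) sequentially"
        using order_tendstoD(2)[OF assms(2) \<kappa>0] .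
      have "eventually (\<lambda>n. crouzeix_ratio (As n) \<le> ereal c + ereal \<epsilon>) sequentially"
      proof (rule eventually_mono[OF ev])
        fix n assume n: "opnorm (As n - A) < \<kappa>"
        define s where "s = complex_of_real (1 / (1 - t))"
        have s_eq: "1 / (1 - complex_of_real t) = s" by (simp add: s_def)
        define B where "B = mat z0 + (As n - mat z0) ** mat s"
        have tne: "t \<noteq> 1" using t1 by simp
        have BAn: "mat (complex_of_real t * z0) + B ** mat (1 - complex_of_real t) = As n"
          using Bn_eq1[OF tne, of z0 "As n"] by (simp add: B_def s_eq)
        have "norm s = 1 / (1 - t)" using t1 unfolding s_def norm_of_real by simp
        moreover have "1 / (1 - t) \<le> 2" using t0 t1 by (simp add: divide_le_eq)
        ultimately have ns: "norm s \<le> 2" by simp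
        have ns1: "norm (s - 1) \<le> 2 * t"
        proof -
          have "s - 1 = complex_of_real (t / (1 - t))" using t1 by (simp add: s_def field_simps)
          then have "norm (s - 1) = \<bar>t / (1 - t)\<bar>" by (simp only: norm_of_real)
          then have "norm (s - 1) = t / (1 - t)" using t0 t1 by simp
          also have "\<dots> \<le> 2 * t" using t0 t1 by (simp add: field_simps)
          finally show ?thesis .
        qed
        have "opnorm (B - A) \<le> opnorm ((As n - A) ** mat s) + opnorm ((A - mat z0) ** mat (s - 1))"
          unfolding B_def Bn_eq2 by (rule opnorm_add)
        also have "\<dots> \<le> opnorm (As n - A) * norm s + a * norm (s - 1)"
          unfolding a_def
          by (intro add_mono order.trans[OF opnorm_mult] mult_left_mono opnorm_mat opnorm_nonneg)
        also have "\<dots> \<le> \<kappa> * 2 + a * (2 * t)"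
          using n ns ns1 a0 opnorm_nonneg[of "As n - A"]
          by (intro add_mono mult_mono mult_left_mono) auto
        also have "\<dots> \<le> \<eta>" using at by (simp add: \<kappa>_def)
        finally have BA: "opnorm (B - A) \<le> \<eta>" .
        have BA\<delta>: "opnorm (B - A) < \<delta>" using BA \<eta>0 \<delta> by (simp add: \<eta>_def)
        have equi': "opnorm (poly_mat q B - poly_mat q A) \<le> \<epsilon>"
          if q: "\<forall>z\<in>numrange A. norm (poly q z) \<le> 1" for q
        proof -
          have "opnorm (poly_mat q B - poly_mat q A) \<le> C * opnorm (B - A)" by (rule equi[OF BA\<delta> q])
          also have "\<dots> \<le> C' * opnorm (B - A)"
            by (intro mult_right_mono opnorm_nonneg) (simp add: C'_def)
          also have "\<dots> \<le> C' * \<eta>" by (intro mult_left_mono BA C'0)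
          also have "\<dots> \<le> C' * (\<epsilon> / (C' + 1))" by (intro mult_left_mono C'0) (simp add: \<eta>_def)
          also have "\<dots> \<le> \<epsilon>" using C'0 \<epsilon> by (simp add: field_simps)
          finally show ?thesis .
        qed
        have An: "opnorm (As n - A) \<le> t * r" using n by (simp add: \<kappa>_def)
        have "crouzeix_ratio (As n) \<le> ereal (c + \<epsilon>)"
          by (rule step[OF r(2) r(1) equi' psi _ _ An BAn]) (use t0 t1 in auto)
        then show "crouzeix_ratio (As n) \<le> ereal c + ereal \<epsilon>" by simp
      qed
      then show "limsup (\<lambda>n. crouzeix_ratio (As n)) \<le> ereal c + ereal \<epsilon>"
        by (rule Limsup_bounded)
    qed
  qed
qed


end
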